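(* Let $q=2^r$ with $r$ even, and $n\ge 1$. Let: - $g\in\mathbb{F}_q[x_1,\dots,x_n]$ be a polynomial of total degree $n(q-1)/3$; - $f\in\mathbb{F}_q[y]$ be a permutation polynomial of degree $q-2$; - $a\in\mathbb{F}_q$ be an element that is not a cube in $\mathbb{F}_q$. Then $$h(x_1,\dots,x_n,y)=\bigl(g(x_1,\dots,x_n)^3-a\bigr)f(y)$$ is a permutation polynomial in $\mathbb{F}_q[x_1,\dots,x_n,y]$.
   Context: $\mathbb{F}_q$ is the finite field with $q$ elements. A polynomial in $m$ variables over $\mathbb{F}_q$ is a permutation polynomial (PP) if, for every $c\in\mathbb{F}_q$, the equation $h=c$ has exactly $q^{m-1}$ solutions in $\mathbb{F}_q^m$. A univariate PP is a polynomial inducing a bijection of $\mathbb{F}_q$. *)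

theory Defs
  imports "HOL-Library.Poly_Mapping" "HOL-Computational_Algebra.Polynomial"
begin

text \<open>Multivariate polynomials over a ring 'a in the variables x_0, x_1, ...:
  finitely supported maps from exponent vectors (monomials) to coefficients.
  Multiplication is the convolution product provided by Poly_Mapping.\<close>
type_synonym 'a mpoly = "(nat \<Rightarrow>\<^sub>0 nat) \<Rightarrow>\<^sub>0 'a"

definition mpoly_eval :: "'a::comm_semiring_1 mpoly \<Rightarrow> (nat \<Rightarrow> 'a) \<Rightarrow> 'a" where
  "mpoly_eval p x = (\<Sum>m\<in>Poly_Mapping.keys p. Poly_Mapping.lookup p m * (\<Prod>i\<in>Poly_Mapping.keys m. x i ^ Poly_Mapping.lookup m i))"

definition mono_degree :: "(nat \<Rightarrow>\<^sub>0 nat) \<Rightarrow> nat" where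
  "mono_degree m = (\<Sum>i\<in>Poly_Mapping.keys m. Poly_Mapping.lookup m i)"

definition total_degree :: "'a::zero mpoly \<Rightarrow> nat" where
  "total_degree p = Max (insert 0 (mono_degree ` Poly_Mapping.keys p))"

definition vars_below :: "'a::zero mpoly \<Rightarrow> nat \<Rightarrow> bool" where
  "vars_below p n \<longleftrightarrow> (\<forall>m\<in>Poly_Mapping.keys p. Poly_Mapping.keys m \<subseteq> {..<n})"

definition mconst :: "'a::zero \<Rightarrow> 'a mpoly" where
  "mconst c = Poly_Mapping.single 0 c"

definition poly_in_var :: "'a::comm_monoid_add poly \<Rightarrow> nat \<Rightarrow> 'a mpoly" where
  "poly_in_var f k = (\<Sum>i\<le>degree f. Poly_Mapping.single (Poly_Mapping.single k i) (coeff f i))"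

text \<open>Points of F^n, encoded as functions vanishing outside {0..<n}.\<close>
definition points :: "nat \<Rightarrow> (nat \<Rightarrow> 'a::zero) set" where
  "points n = {x. \<forall>i\<ge>n. x i = 0}"

definition is_PP :: "nat \<Rightarrow> 'a::{finite,field} mpoly \<Rightarrow> bool" where
  "is_PP m p \<longleftrightarrow> (\<forall>c. card {x \<in> points m. mpoly_eval p x = c} = card (UNIV :: 'a set) ^ (m - 1))"

definition univ_PP :: "'a::{finite,field} poly \<Rightarrow> bool" where
  "univ_PP f \<longleftrightarrow> bij (poly f)"

definition is_cube :: "'a::field \<Rightarrow> bool" where
  "is_cube a \<longleftrightarrow> (\<exists>b. b ^ 3 = a)"

end

theory Submission
  imports Defs "HOL-Library.FuncSet"
begin

definition monoev :: "(nat \<Rightarrow> 'a::comm_semiring_1) \<Rightarrow> (nat \<Rightarrow>\<^sub>0 nat) \<Rightarrow> 'a" where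
  "monoev x m = (\<Prod>i\<in>Poly_Mapping.keys m. x i ^ Poly_Mapping.lookup m i)"

lemma monoev_super:
  assumes "finite S" "Poly_Mapping.keys m \<subseteq> S"
  shows "monoev x m = (\<Prod>i\<in>S. x i ^ Poly_Mapping.lookup m i)"
  unfolding monoev_def
  by (rule prod.mono_neutral_left[OF assms]) (auto simp: in_keys_iff)

lemma monoev_add: "monoev x (m1 + m2) = monoev x m1 * monoev x m2"
proof -
  let ?S = "Poly_Mapping.keys m1 \<union> Poly_Mapping.keys m2"
  have f: "finite ?S" by simp
  have "monoev x (m1 + m2) = (\<Prod>i\<in>?S. x i ^ Poly_Mapping.lookup (m1+m2) i)"
    by (rule monoev_super[OF f]) (metis keys_add)
  also have "\<dots> = (\<Prod>i\<in>?S. x i ^ Poly_Mapping.lookup m1 i) * (\<Prod>i\<in>?S. x i ^ Poly_Mapping.lookup m2 i)"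
    by (simp add: lookup_add power_add prod.distrib)
  also have "\<dots> = monoev x m1 * monoev x m2"
    using monoev_super[OF f, of m1 x] monoev_super[OF f, of m2 x] by simp
  finally show ?thesis .
qed

lemma eval_alt: "mpoly_eval p x = (\<Sum>m\<in>Poly_Mapping.keys p. Poly_Mapping.lookup p m * monoev x m)"
  unfolding mpoly_eval_def monoev_def ..

lemma eval_super:
  assumes "finite S" "Poly_Mapping.keys p \<subseteq> S"
  shows "mpoly_eval p x = (\<Sum>m\<in>S. Poly_Mapping.lookup p m * monoev x m)"
  unfolding eval_alt
  by (rule sum.mono_neutral_left[OF assms]) (auto simp: in_keys_iff)

lemma eval_add: "mpoly_eval (p + q) x = mpoly_eval p x + mpoly_eval q x"
proof -
  let ?S = "Poly_Mapping.keys p \<union> Poly_Mapping.keys q"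
  have f: "finite ?S" by simp
  have "mpoly_eval (p + q) x = (\<Sum>m\<in>?S. Poly_Mapping.lookup (p+q) m * monoev x m)"
    by (rule eval_super[OF f]) (metis keys_add)
  also have "\<dots> = (\<Sum>m\<in>?S. Poly_Mapping.lookup p m * monoev x m) + (\<Sum>m\<in>?S. Poly_Mapping.lookup q m * monoev x m)"
    by (simp add: lookup_add distrib_right sum.distrib)
  also have "\<dots> = mpoly_eval p x + mpoly_eval q x"
    using eval_super[OF f, of p x] eval_super[OF f, of q x] by simp
  finally show ?thesis .
qed

lemma eval_zero: "mpoly_eval 0 x = 0"
  by (simp add: mpoly_eval_def)

lemma eval_diff: "mpoly_eval ((p::'a::comm_ring_1 mpoly) - q) x = mpoly_eval p x - mpoly_eval q x"
  using eval_add[of "p - q" q x] by (simp add: eq_diff_eq)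

lemma eval_single: "mpoly_eval (Poly_Mapping.single m c) x = c * monoev x m"
  by (subst eval_super[of "{m}"]) auto

lemma eval_sum: "mpoly_eval (\<Sum>i\<in>I. F i) x = (\<Sum>i\<in>I. mpoly_eval (F i) x)"
  by (induction I rule: infinite_finite_induct) (auto simp: eval_zero eval_add)

lemma mpoly_expand: "p = (\<Sum>m\<in>Poly_Mapping.keys p. Poly_Mapping.single m (Poly_Mapping.lookup p m))"
proof (rule poly_mapping_eqI)
  fix k
  show "Poly_Mapping.lookup p k = Poly_Mapping.lookup (\<Sum>m\<in>Poly_Mapping.keys p. Poly_Mapping.single m (Poly_Mapping.lookup p m)) k"
  proof (cases "k \<in> Poly_Mapping.keys p")
    case True
    then show ?thesis
      by (simp add: lookup_sum lookup_single when_def sum.delta)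
  next
    case False
    then show ?thesis
      by (simp add: lookup_sum lookup_single when_def in_keys_iff)
  qed
qed

lemma eval_mult: "mpoly_eval ((p::'a::comm_semiring_1 mpoly) * q) x = mpoly_eval p x * mpoly_eval q x"
proof -
  let ?P = "Poly_Mapping.keys p" and ?Q = "Poly_Mapping.keys q"
  have "p * q = (\<Sum>m\<in>?P. Poly_Mapping.single m (Poly_Mapping.lookup p m)) * (\<Sum>m'\<in>?Q. Poly_Mapping.single m' (Poly_Mapping.lookup q m'))"
    using mpoly_expand[of p] mpoly_expand[of q] by simp
  also have "\<dots> = (\<Sum>m\<in>?P. \<Sum>m'\<in>?Q. Poly_Mapping.single (m + m') (Poly_Mapping.lookup p m * Poly_Mapping.lookup q m'))"
    by (simp add: sum_product mult_single)
  finally have "mpoly_eval (p * q) x = (\<Sum>m\<in>?P. \<Sum>m'\<in>?Q. Poly_Mapping.lookup p m * monoev x m * (Poly_Mapping.lookup q m' * monoev x m'))"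
    by (simp add: eval_sum eval_single monoev_add mult_ac)
  also have "\<dots> = mpoly_eval p x * mpoly_eval q x"
    by (simp add: eval_alt sum_product)
  finally show ?thesis .
qed

lemma eval_mconst: "mpoly_eval (mconst c) x = c"
  by (simp add: mconst_def eval_single monoev_def)

lemma eval_poly_in_var: "mpoly_eval (poly_in_var f k) x = poly f (x k)"
proof -
  have m: "monoev x (Poly_Mapping.single k i) = x k ^ i" for i
    by (cases "i = 0") (auto simp: monoev_def)
  show ?thesis
    by (simp add: poly_in_var_def eval_sum eval_single m poly_altdef)
qed

lemma eval_vars:
  assumes "vars_below p n" "\<And>i. i < n \<Longrightarrow> x i = y i"
  shows "mpoly_eval p x = mpoly_eval p y"
  unfolding mpoly_eval_def
proof (rule sum.cong[OF refl])
  fix m assume m: "m \<in> Poly_Mapping.keys p"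
  have "Poly_Mapping.keys m \<subseteq> {..<n}" using assms(1) m by (auto simp: vars_below_def)
  then have "(\<Prod>i\<in>Poly_Mapping.keys m. x i ^ Poly_Mapping.lookup m i) = (\<Prod>i\<in>Poly_Mapping.keys m. y i ^ Poly_Mapping.lookup m i)"
    using assms(2) by (intro prod.cong) auto
  then show "Poly_Mapping.lookup p m * (\<Prod>i\<in>Poly_Mapping.keys m. x i ^ Poly_Mapping.lookup m i) =
    Poly_Mapping.lookup p m * (\<Prod>i\<in>Poly_Mapping.keys m. y i ^ Poly_Mapping.lookup m i)" by simp
qed

lemma card_points: "card (points n :: (nat \<Rightarrow> 'a::{finite,zero}) set) = card (UNIV :: 'a set) ^ n"
proof -
  have "bij_betw (\<lambda>x. restrict x {..<n}) (points n :: (nat \<Rightarrow> 'a) set) (PiE {..<n} (\<lambda>_. UNIV))"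
  proof (rule bij_betw_byWitness[where f' = "\<lambda>y i. if i < n then y i else 0"])
    show "\<forall>a\<in>points n. (\<lambda>i. if i < n then restrict a {..<n} i else 0) = a"
      by (simp add: points_def fun_eq_iff)
    show "\<forall>a'\<in>PiE {..<n} (\<lambda>_. UNIV). restrict (\<lambda>i. if i < n then a' i else 0) {..<n} = (a' :: nat \<Rightarrow> 'a)"
    proof
      fix a' :: "nat \<Rightarrow> 'a" assume h: "a' \<in> PiE {..<n} (\<lambda>_. UNIV)"
      show "restrict (\<lambda>i. if i < n then a' i else 0) {..<n} = a'"
      proof
        fix i show "restrict (\<lambda>i. if i < n then a' i else 0) {..<n} i = a' i"
        proof (cases "i < n")
          case True then show ?thesis by (simp only: restrict_def lessThan_iff if_True)
        next
          case False
          have "a' i = undefined" using PiE_arb[OF h, of i] False by (simp only: lessThan_iff simp_thms)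
          then show ?thesis using False by (simp only: restrict_def lessThan_iff if_False)
        qed
      qed
    qed
    show "(\<lambda>x. restrict x {..<n}) ` points n \<subseteq> PiE {..<n} (\<lambda>_. UNIV)" by (simp add: image_subset_iff)
    show "(\<lambda>y i. if i < n then y i else 0) ` PiE {..<n} (\<lambda>_. UNIV) \<subseteq> (points n :: (nat \<Rightarrow> 'a) set)"
    proof -
      have "\<And>y::nat\<Rightarrow>'a. (\<lambda>i. if i < n then y i else 0) \<in> points n" by (simp add: points_def)
      then show ?thesis by blast
    qed
  qed
  then have "card (points n :: (nat \<Rightarrow> 'a) set) = card (PiE {..<n} (\<lambda>_. UNIV :: 'a set))"
    by (rule bij_betw_same_card)
  also have "\<dots> = card (UNIV :: 'a set) ^ n" by (simp add: card_PiE)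
  finally show ?thesis .
qed

theorem mainTheorem7:
  fixes g :: "'a::{finite,field} mpoly" and f :: "'a poly" and a :: 'a
    and r n :: nat
  assumes "card (UNIV :: 'a set) = 2 ^ r" and "even r" and "n \<ge> 1"
    and "vars_below g n"
    and "total_degree g = n * (card (UNIV :: 'a set) - 1) div 3"
    and "univ_PP f" and "degree f = card (UNIV :: 'a set) - 2"
    and "\<not> is_cube a"
  shows "is_PP (n + 1) ((g ^ 3 - mconst a) * poly_in_var f n)"
  unfolding is_PP_def
proof
  fix c :: 'a
  let ?h = "(g ^ 3 - mconst a) * poly_in_var f n"
  let ?S = "{x \<in> points (n + 1). mpoly_eval ?h x = c}"
  define u where "u x = mpoly_eval g x ^ 3 - a" for x
  have bij: "bij (poly f)" using assms(6) by (simp add: univ_PP_def)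
  have u0: "u x \<noteq> 0" for x
    using assms(8) by (auto simp: u_def is_cube_def)
  have ev: "mpoly_eval ?h x = u x * poly f (x n)" for x
    by (simp add: eval_mult eval_diff eval_mconst eval_poly_in_var u_def power3_eq_cube)
  have uupd: "u (x(n := t)) = u x" for x t
    unfolding u_def using eval_vars[OF assms(4), of "x(n := t)" x] by simp
  define t where "t x = inv (poly f) (c / u x)" for x
  have pt: "poly f (t x) = c / u x" for x
    unfolding t_def by (meson bij bij_is_surj surj_f_inv_f)
  have "bij_betw (\<lambda>x. x(n := t x)) (points n) ?S"
  proof (rule bij_betw_byWitness[where f' = "\<lambda>z. z(n := 0)"])
    show "\<forall>x\<in>points n. (x(n := t x))(n := 0) = x"
      by (auto simp: points_def fun_eq_iff)
    show "\<forall>z\<in>?S. (z(n := 0))(n := t (z(n := 0))) = z"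
    proof
      fix z assume z: "z \<in> ?S"
      have "u z * poly f (z n) = c" using z ev[of z] by simp
      then have "poly f (z n) = c / u (z(n:=0))" using u0[of z] uupd[of z 0]
        by (simp add: field_simps)
      then have "t (z(n:=0)) = z n"
        unfolding t_def by (metis bij bij_is_inj inv_f_f)
      then show "(z(n := 0))(n := t (z(n := 0))) = z" by (auto simp: fun_eq_iff)
    qed
    show "(\<lambda>x. x(n := t x)) ` points n \<subseteq> ?S"
    proof
      fix y assume "y \<in> (\<lambda>x. x(n := t x)) ` points n"
      then obtain x where x: "x \<in> points n" "y = x(n := t x)" by auto
      have "mpoly_eval ?h y = u x * (c / u x)" using ev[of y] x(2) uupd pt by simp
      also have "\<dots> = c" using u0[of x] by simp
      finally show "y \<in> ?S" using x by (auto simp: points_def)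
    qed
    show "(\<lambda>z. z(n := 0)) ` ?S \<subseteq> points n"
      by (auto simp: points_def)
  qed
  then have "card (points n :: (nat \<Rightarrow> 'a) set) = card ?S"
    by (rule bij_betw_same_card)
  then show "card ?S = card (UNIV :: 'a set) ^ (n + 1 - 1)"
    using card_points[where 'a='a, of n] by simp
qed

end
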